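(* Let $\beta > 0$ be fixed. There is a constant $C$ such that for all $\alpha > 0$, $\tau > 0$, and every $u \in \mathrm{H}^1(\mathbb{R})$ that is continuous and affine on each interval $[k\tau,(k+1)\tau]$, $k \in \mathbb{Z}$, the upwinded interpolant $v$ of $u$ satisfies $$\alpha \int_{\mathbb{R}} | \dot v|^2 \leq C\left( |u|_{\mathrm{H}^{1/2}}^2 + \alpha \int_{\mathbb{R}} | \dot u |^2\right).$$
   Context: The upwinded interpolant of a continuous $u$ is the unique continuous function $v$ with $v(k\tau) = u(k\tau)$ for all $k \in \mathbb{Z}$ and which on each $[k\tau,(k+1)\tau]$ is of the form $c_1 + c_2\exp(-\beta t/\alpha)$ for constants $c_1,c_2$. A dot denotes the derivative. $|u|_{\mathrm{H}^{1/2}}$ is the $\mathrm{H}^{1/2}(\mathbb{R})$ seminorm (Slobodetski or, equivalently, Fourier seminorm). *)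

theory Defs
  imports "HOL-Analysis.Analysis"
begin

definition piecewise_affine_grid :: "real \<Rightarrow> (real \<Rightarrow> real) \<Rightarrow> bool" where
  "piecewise_affine_grid \<tau> u \<longleftrightarrow> continuous_on UNIV u \<and>
     (\<forall>k::int. \<exists>a b. \<forall>t\<in>{real_of_int k * \<tau> .. (real_of_int k + 1) * \<tau>}. u t = a + b * t)"

definition L2_sq :: "(real \<Rightarrow> real) \<Rightarrow> ennreal" where
  "L2_sq f = (\<integral>\<^sup>+ t. ennreal ((f t)\<^sup>2) \<partial>lborel)"

text \<open>Membership in H^1(R) (u and its derivative square integrable); for continuous
  piecewise affine u the classical derivative (defined off the grid) is the weak derivative.\<close>
definition in_H1 :: "(real \<Rightarrow> real) \<Rightarrow> bool" where
  "in_H1 u \<longleftrightarrow> u \<in> borel_measurable lborel \<and> L2_sq u < \<infinity> \<and> L2_sq (deriv u) < \<infinity>"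

definition H12_seminorm_sq :: "(real \<Rightarrow> real) \<Rightarrow> ennreal" where
  "H12_seminorm_sq u = (\<integral>\<^sup>+ x. \<integral>\<^sup>+ y. ennreal ((u x - u y)\<^sup>2 / (x - y)\<^sup>2) \<partial>lborel \<partial>lborel)"

definition upwinded_interpolant ::
  "real \<Rightarrow> real \<Rightarrow> real \<Rightarrow> (real \<Rightarrow> real) \<Rightarrow> (real \<Rightarrow> real) \<Rightarrow> bool" where
  "upwinded_interpolant \<alpha> \<beta> \<tau> u v \<longleftrightarrow> continuous_on UNIV v \<and>
     (\<forall>k::int. v (real_of_int k * \<tau>) = u (real_of_int k * \<tau>)) \<and>
     (\<forall>k::int. \<exists>c1 c2. \<forall>t\<in>{real_of_int k * \<tau> .. (real_of_int k + 1) * \<tau>}.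
        v t = c1 + c2 * exp (- \<beta> * t / \<alpha>))"

end

theory Submission
  imports Defs "HOL-Library.Nat_Bijection"
begin

definition cell :: "real \<Rightarrow> int \<Rightarrow> real set" where
  "cell \<tau> j = {real_of_int j * \<tau> <..< (real_of_int j + 1) * \<tau>}"

lemma cell_floor:
  assumes "\<tau> > 0" "t \<in> cell \<tau> j" shows "\<lfloor>t / \<tau>\<rfloor> = j"
proof -
  have "real_of_int j < t / \<tau>" "t / \<tau> < real_of_int j + 1"
    using assms by (auto simp: cell_def field_simps)
  then show ?thesis by (simp add: floor_eq_iff)
qed

lemma cell_disj:
  assumes "\<tau> > 0" "t \<in> cell \<tau> j" "j' \<noteq> j" shows "t \<notin> cell \<tau> j'"
  using cell_floor[OF assms(1,2)] cell_floor[OF assms(1)] assms(3) by metis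

lemma cell_cover:
  assumes "\<tau> > 0" "\<forall>j::int. t \<noteq> real_of_int j * \<tau>" shows "t \<in> cell \<tau> \<lfloor>t / \<tau>\<rfloor>"
proof -
  have a: "real_of_int \<lfloor>t / \<tau>\<rfloor> \<le> t / \<tau>" "t / \<tau> < real_of_int \<lfloor>t / \<tau>\<rfloor> + 1"
    by linarith+
  have "real_of_int \<lfloor>t / \<tau>\<rfloor> * \<tau> \<le> t" "t < (real_of_int \<lfloor>t / \<tau>\<rfloor> + 1) * \<tau>"
    using mult_right_mono[OF a(1), of \<tau>] mult_strict_right_mono[OF a(2) assms(1)] assms(1) by auto
  moreover have "real_of_int \<lfloor>t / \<tau>\<rfloor> * \<tau> \<noteq> t"
    using assms(2) by metis
  ultimately show ?thesis by (simp add: cell_def)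
qed

lemma AE_offgrid: "AE t in lborel. \<forall>j::int. t \<noteq> real_of_int j * \<tau>"
  by (subst AE_all_countable) (auto intro: AE_lborel_singleton)

lemma sum_single_ennreal:
  fixes c :: "nat \<Rightarrow> ennreal"
  assumes "\<And>n. n \<noteq> m \<Longrightarrow> c n = 0"
  shows "(\<Sum>n. c n) = c m"
proof -
  have "c = (\<lambda>n. if n = m then c n else 0)" using assms by auto
  then show ?thesis using sums_single[of m c] sums_unique by metis
qed

lemma sum_cells:
  fixes c :: "nat \<Rightarrow> ennreal"
  assumes "\<tau> > 0" "t \<in> cell \<tau> (int_decode m)"
  shows "(\<Sum>n. c n * indicator (cell \<tau> (int_decode n)) t) = c m"
proof -
  have "(\<Sum>n. c n * indicator (cell \<tau> (int_decode n)) t) = c m * indicator (cell \<tau> (int_decode m)) t"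
  proof (rule sum_single_ennreal)
    fix n assume "n \<noteq> m"
    then have "int_decode n \<noteq> int_decode m" using bij_int_decode by (metis bij_def injD)
    then show "c n * indicator (cell \<tau> (int_decode n)) t = 0"
      using cell_disj[OF assms] by auto
  qed
  then show ?thesis using assms by simp
qed

lemma offgrid_cell:
  assumes "\<tau> > 0" "\<forall>j::int. t \<noteq> real_of_int j * \<tau>"
  obtains m where "t \<in> cell \<tau> (int_decode m)"
proof -
  obtain m where "int_decode m = \<lfloor>t / \<tau>\<rfloor>" using bij_int_decode by (metis bij_pointE)
  then show ?thesis using cell_cover[OF assms] by (intro that[of m]) simp
qed

lemma decomp:
  fixes F :: "real \<Rightarrow> ennreal"
  assumes "\<tau> > 0" and meas: "\<And>n. (\<lambda>t. F t * indicator (cell \<tau> (int_decode n)) t) \<in> borel_measurable lborel"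
  shows "(\<integral>\<^sup>+t. F t \<partial>lborel) = (\<Sum>n. \<integral>\<^sup>+t. F t * indicator (cell \<tau> (int_decode n)) t \<partial>lborel)"
proof -
  have "AE t in lborel. F t = (\<Sum>n. F t * indicator (cell \<tau> (int_decode n)) t)"
    using AE_offgrid[of \<tau>]
  proof eventually_elim
    case (elim t)
    then obtain m where "t \<in> cell \<tau> (int_decode m)" using offgrid_cell assms(1) by blast
    then show ?case using sum_cells[OF assms(1), of t m "\<lambda>_. F t"] by simp
  qed
  then have "(\<integral>\<^sup>+t. F t \<partial>lborel) = (\<integral>\<^sup>+t. (\<Sum>n. F t * indicator (cell \<tau> (int_decode n)) t) \<partial>lborel)"
    by (rule nn_integral_cong_AE)
  also have "\<dots> = (\<Sum>n. \<integral>\<^sup>+t. F t * indicator (cell \<tau> (int_decode n)) t \<partial>lborel)"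
    by (rule nn_integral_suminf[OF meas])
  finally show ?thesis .
qed


lemma deriv_affine:
  fixes u :: "real \<Rightarrow> real"
  assumes "\<forall>t\<in>{a..b}. u t = A + B * t" "t \<in> {a<..<b}"
  shows "deriv u t = B"
proof -
  have "((\<lambda>t. A + B * t) has_real_derivative B) (at t)"
    by (auto intro!: derivative_eq_intros)
  then have "(u has_real_derivative B) (at t)"
    by (rule has_field_derivative_transform_within_open[of _ _ _ "{a<..<b}"]) (use assms in auto)
  then show ?thesis by (rule DERIV_imp_deriv)
qed

lemma deriv_expo:
  fixes v :: "real \<Rightarrow> real"
  assumes "\<forall>t\<in>{a..b}. v t = c1 + c2 * exp (- \<beta> * t / \<alpha>)" "t \<in> {a<..<b}" "\<alpha> \<noteq> 0"
  shows "deriv v t = c2 * (exp (- \<beta> * t / \<alpha>) * (- \<beta> / \<alpha>))"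
proof -
  have "((\<lambda>t. c1 + c2 * exp (- \<beta> * t / \<alpha>)) has_real_derivative c2 * (exp (- \<beta> * t / \<alpha>) * (- \<beta> / \<alpha>))) (at t)"
    using assms(3) by (auto intro!: derivative_eq_intros)
  then have "(v has_real_derivative c2 * (exp (- \<beta> * t / \<alpha>) * (- \<beta> / \<alpha>))) (at t)"
    by (rule has_field_derivative_transform_within_open[of _ _ _ "{a<..<b}"]) (use assms in auto)
  then show ?thesis by (rule DERIV_imp_deriv)
qed

lemma U_cell:
  fixes u :: "real \<Rightarrow> real"
  assumes "\<forall>t\<in>{a..a+\<tau>}. u t = A + B * t" "\<tau> > 0"
  shows "(\<integral>\<^sup>+t. ennreal ((deriv u t)\<^sup>2) * indicator {a<..<a+\<tau>} t \<partial>lborel) = ennreal (B\<^sup>2 * \<tau>)"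
proof -
  have "(\<integral>\<^sup>+t. ennreal ((deriv u t)\<^sup>2) * indicator {a<..<a+\<tau>} t \<partial>lborel)
      = (\<integral>\<^sup>+t. ennreal (B\<^sup>2) * indicator {a<..<a+\<tau>} t \<partial>lborel)"
    by (rule nn_integral_cong) (auto simp: indicator_def deriv_affine[OF assms(1)])
  also have "\<dots> = ennreal (B\<^sup>2) * ennreal \<tau>"
    using assms(2) by (simp add: nn_integral_cmult_indicator)
  finally show ?thesis using assms(2) by (simp add: ennreal_mult)
qed

lemma key_ineq:
  fixes \<alpha> \<beta> \<tau> p q c :: real
  assumes "\<alpha> > 0" "\<beta> > 0" "\<tau> > 0" "q > 0" "p = q * exp (\<beta> * \<tau> / \<alpha>)"
  shows "c\<^sup>2 * \<beta> * (p\<^sup>2 - q\<^sup>2) / 2 \<le> (\<beta>/2) * (c * (q - p))\<^sup>2 + \<alpha> * (c * (q - p) / \<tau>)\<^sup>2 * \<tau>"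
proof -
  have e: "exp (\<beta> * \<tau> / \<alpha>) \<ge> 1 + \<beta> * \<tau> / \<alpha>" by (rule exp_ge_add_one_self)
  have "p - q \<ge> q * (\<beta> * \<tau> / \<alpha>)"
    using mult_left_mono[OF e, of q] assms(4,5) by (simp add: algebra_simps)
  then have "p - q \<ge> q * \<beta> * \<tau> / \<alpha>" by simp
  then have h1: "(\<alpha> / \<tau>) * (p - q) \<ge> \<beta> * q"
    using assms(1,3) by (simp add: field_simps)
  have h2: "p - q \<ge> 0" using \<open>p - q \<ge> q * \<beta> * \<tau> / \<alpha>\<close> assms by (smt (verit) divide_pos_pos mult_pos_pos)
  have "c\<^sup>2 * (p - q) * ((\<alpha> / \<tau>) * (p - q) - \<beta> * q) \<ge> 0"
    using h1 h2 by simp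
  moreover have "(\<beta>/2) * (c * (q - p))\<^sup>2 + \<alpha> * (c * (q - p) / \<tau>)\<^sup>2 * \<tau> - c\<^sup>2 * \<beta> * (p\<^sup>2 - q\<^sup>2) / 2
      = c\<^sup>2 * (p - q) * ((\<alpha> / \<tau>) * (p - q) - \<beta> * q)"
    using assms(3) by (simp add: field_simps power2_eq_square)
  ultimately show ?thesis by linarith
qed


lemma V_cell:
  fixes u v :: "real \<Rightarrow> real"
  assumes "\<alpha> > 0" "\<beta> > 0" "\<tau> > 0"
   "\<forall>t\<in>{a..a+\<tau>}. u t = A + B * t"
   "\<forall>t\<in>{a..a+\<tau>}. v t = c1 + c2 * exp (- \<beta> * t / \<alpha>)"
   "v a = u a" "v (a+\<tau>) = u (a+\<tau>)"
  shows "ennreal \<alpha> * (\<integral>\<^sup>+t. ennreal ((deriv v t)\<^sup>2) * indicator {a<..<a+\<tau>} t \<partial>lborel)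
           \<le> ennreal ((\<beta>/2) * (B * \<tau>)\<^sup>2) + ennreal (\<alpha> * B\<^sup>2 * \<tau>)"
proof -
  define D where "D t = c2 * (exp (- \<beta> * t / \<alpha>) * (- \<beta> / \<alpha>))" for t
  define P where "P t = -(c2\<^sup>2 * \<beta> / (2 * \<alpha>)) * (exp (- \<beta> * t / \<alpha>))\<^sup>2" for t
  have der: "(P has_real_derivative (D t)\<^sup>2) (at t)" for t
    unfolding P_def D_def using assms(1)
    by (auto intro!: derivative_eq_intros simp: field_simps power2_eq_square)
  have int: "((\<lambda>t. (D t)\<^sup>2) has_integral (P (a+\<tau>) - P a)) {a..a+\<tau>}"
    by (rule fundamental_theorem_of_calculus)
       (use assms(3) der in \<open>auto simp: has_real_derivative_iff_has_vector_derivative intro: has_vector_derivative_at_within\<close>)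
  have fe: "(\<lambda>t. (D t)\<^sup>2 * indicator {a..a+\<tau>} t) = (\<lambda>t. if t \<in> {a..a+\<tau>} then (D t)\<^sup>2 else 0)"
    by (auto simp: indicator_def fun_eq_iff)
  have int2: "((\<lambda>t. (D t)\<^sup>2 * indicator {a..a+\<tau>} t) has_integral (P (a+\<tau>) - P a)) UNIV"
    unfolding fe has_integral_restrict_UNIV by (rule int)
  have meas: "(\<lambda>t. (D t)\<^sup>2 * indicator {a..a+\<tau>} t) \<in> borel_measurable borel"
    unfolding D_def by measurable
  have eq: "(\<integral>\<^sup>+t. ennreal ((D t)\<^sup>2 * indicator {a..a+\<tau>} t) \<partial>lborel) = ennreal (P (a+\<tau>) - P a)"
    by (rule nn_integral_has_integral_lborel[OF meas _ int2]) simp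
  have mono: "(\<integral>\<^sup>+t. ennreal ((deriv v t)\<^sup>2) * indicator {a<..<a+\<tau>} t \<partial>lborel)
      \<le> (\<integral>\<^sup>+t. ennreal ((D t)\<^sup>2 * indicator {a..a+\<tau>} t) \<partial>lborel)"
  proof (rule nn_integral_mono)
    fix t
    show "ennreal ((deriv v t)\<^sup>2) * indicator {a<..<a+\<tau>} t \<le> ennreal ((D t)\<^sup>2 * indicator {a..a+\<tau>} t)"
    proof (cases "t \<in> {a<..<a+\<tau>}")
      case True
      then have "deriv v t = D t" unfolding D_def
        using deriv_expo[OF assms(5) True] assms(1) by simp
      then show ?thesis using True by (simp add: indicator_def)
    qed (auto simp: indicator_def)
  qed
  define p where "p = exp (- \<beta> * a / \<alpha>)"
  define q where "q = exp (- \<beta> * (a+\<tau>) / \<alpha>)"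
  have pq: "p = q * exp (\<beta> * \<tau> / \<alpha>)"
  proof -
    have "- \<beta> * a / \<alpha> = - \<beta> * (a+\<tau>) / \<alpha> + \<beta> * \<tau> / \<alpha>"
      using assms(1) by (simp add: field_simps)
    then show ?thesis unfolding p_def q_def by (metis exp_add)
  qed
  have Bt: "B * \<tau> = c2 * (q - p)"
  proof -
    have "u (a+\<tau>) - u a = B * \<tau>" using assms(3,4) by (auto simp: algebra_simps)
    moreover have "v (a+\<tau>) = c1 + c2 * q" using assms(3,5) unfolding q_def by simp
    moreover have "v a = c1 + c2 * p" using assms(3,5) unfolding p_def by simp
    ultimately show ?thesis using assms(6,7) by (simp add: algebra_simps)
  qed
  have B_eq: "B = c2 * (q - p) / \<tau>" using Bt assms(3) by (simp add: field_simps)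
  have real_ineq: "\<alpha> * (P (a+\<tau>) - P a) \<le> (\<beta>/2) * (B * \<tau>)\<^sup>2 + \<alpha> * B\<^sup>2 * \<tau>"
  proof -
    have "\<alpha> * (P (a+\<tau>) - P a) = c2\<^sup>2 * \<beta> * (p\<^sup>2 - q\<^sup>2) / 2"
      unfolding P_def p_def q_def using assms(1) by (simp add: field_simps)
    also have "\<dots> \<le> (\<beta>/2) * (c2 * (q - p))\<^sup>2 + \<alpha> * (c2 * (q - p) / \<tau>)\<^sup>2 * \<tau>"
      by (rule key_ineq[OF assms(1,2,3) _ pq]) (simp add: q_def)
    finally show ?thesis unfolding Bt B_eq by simp
  qed
  have Pnn: "P (a+\<tau>) - P a \<ge> 0"
    using has_integral_nonneg[OF int] by simp
  have "ennreal \<alpha> * (\<integral>\<^sup>+t. ennreal ((deriv v t)\<^sup>2) * indicator {a<..<a+\<tau>} t \<partial>lborel)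
      \<le> ennreal \<alpha> * ennreal (P (a+\<tau>) - P a)"
    using mono eq by (metis mult_left_mono zero_le)
  also have "\<dots> = ennreal (\<alpha> * (P (a+\<tau>) - P a))"
    using assms(1) Pnn by (simp add: ennreal_mult)
  also have "\<dots> \<le> ennreal ((\<beta>/2) * (B * \<tau>)\<^sup>2 + \<alpha> * B\<^sup>2 * \<tau>)"
    by (rule ennreal_leI[OF real_ineq])
  also have "\<dots> = ennreal ((\<beta>/2) * (B * \<tau>)\<^sup>2) + ennreal (\<alpha> * B\<^sup>2 * \<tau>)"
    using assms by (intro ennreal_plus) auto
  finally show ?thesis .
qed


lemma H_cell:
  fixes u :: "real \<Rightarrow> real"
  assumes "\<forall>t\<in>{a..a+\<tau>}. u t = A + B * t" "\<tau> > 0" "x \<in> {a<..<a+\<tau>}"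
  shows "ennreal (B\<^sup>2 * \<tau>) \<le> (\<integral>\<^sup>+y. ennreal ((u x - u y)\<^sup>2 / (x - y)\<^sup>2) \<partial>lborel)"
proof -
  have "ennreal (B\<^sup>2 * \<tau>) = (\<integral>\<^sup>+y. ennreal (B\<^sup>2) * indicator {a<..<a+\<tau>} y \<partial>lborel)"
    using assms(2) by (simp add: nn_integral_cmult_indicator ennreal_mult)
  also have "\<dots> \<le> (\<integral>\<^sup>+y. ennreal ((u x - u y)\<^sup>2 / (x - y)\<^sup>2) \<partial>lborel)"
  proof (rule nn_integral_mono_AE)
    show "AE y in lborel. ennreal (B\<^sup>2) * indicator {a<..<a+\<tau>} y \<le> ennreal ((u x - u y)\<^sup>2 / (x - y)\<^sup>2)"
      using AE_lborel_singleton[of x]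
    proof eventually_elim
      case (elim y)
      show ?case
      proof (cases "y \<in> {a<..<a+\<tau>}")
        case True
        have "u x - u y = B * (x - y)" using assms(1,3) True by (auto simp: algebra_simps)
        then have "(u x - u y)\<^sup>2 / (x - y)\<^sup>2 = B\<^sup>2" using elim by (simp add: power_mult_distrib)
        then show ?thesis using True by simp
      qed (auto simp: indicator_def)
    qed
  qed
  finally show ?thesis .
qed


lemma main_bound:
  fixes u v :: "real \<Rightarrow> real"
  assumes "\<beta> > 0" "\<alpha> > 0" "\<tau> > 0" "piecewise_affine_grid \<tau> u" "upwinded_interpolant \<alpha> \<beta> \<tau> u v"
  shows "ennreal \<alpha> * L2_sq (deriv v) \<le> ennreal (\<beta>/2) * H12_seminorm_sq u + ennreal \<alpha> * L2_sq (deriv u)"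
proof -
  have "\<forall>k::int. \<exists>a b. \<forall>t\<in>{real_of_int k * \<tau> .. (real_of_int k + 1) * \<tau>}. u t = a + b * t"
    using assms(4) unfolding piecewise_affine_grid_def by blast
  then obtain A B :: "int \<Rightarrow> real" where AB0: "\<forall>k. \<forall>t\<in>{real_of_int k * \<tau> .. (real_of_int k + 1) * \<tau>}. u t = A k + B k * t"
    by metis
  have "\<forall>k::int. \<exists>c1 c2. \<forall>t\<in>{real_of_int k * \<tau> .. (real_of_int k + 1) * \<tau>}. v t = c1 + c2 * exp (- \<beta> * t / \<alpha>)"
    using assms(5) unfolding upwinded_interpolant_def by blast
  then obtain c1 c2 :: "int \<Rightarrow> real" where cc0: "\<forall>k. \<forall>t\<in>{real_of_int k * \<tau> .. (real_of_int k + 1) * \<tau>}. v t = c1 k + c2 k * exp (- \<beta> * t / \<alpha>)"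
    by metis
  have interp: "\<And>k::int. v (real_of_int k * \<tau>) = u (real_of_int k * \<tau>)"
    using assms(5) unfolding upwinded_interpolant_def by blast
  have sh: "(real_of_int k + 1) * \<tau> = real_of_int k * \<tau> + \<tau>" for k by (simp add: distrib_right)
  have AB: "\<forall>t\<in>{real_of_int k * \<tau> .. real_of_int k * \<tau> + \<tau>}. u t = A k + B k * t" for k
    using AB0 sh by metis
  have cc: "\<forall>t\<in>{real_of_int k * \<tau> .. real_of_int k * \<tau> + \<tau>}. v t = c1 k + c2 k * exp (- \<beta> * t / \<alpha>)" for k
    using cc0 sh by metis
  have i1: "v (real_of_int k * \<tau> + \<tau>) = u (real_of_int k * \<tau> + \<tau>)" for k
    using interp[of "k+1"] sh[of k] by simp
  have cellk: "cell \<tau> k = {real_of_int k * \<tau> <..< real_of_int k * \<tau> + \<tau>}" for k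
    unfolding cell_def sh ..
  define j where "j n = int_decode n" for n
  have dv: "(\<lambda>t. ennreal ((deriv v t)\<^sup>2) * indicator (cell \<tau> k) t)
      = (\<lambda>t. ennreal ((c2 k * (exp (- \<beta> * t / \<alpha>) * (- \<beta> / \<alpha>)))\<^sup>2) * indicator (cell \<tau> k) t)" for k
  proof
    fix t show "ennreal ((deriv v t)\<^sup>2) * indicator (cell \<tau> k) t
      = ennreal ((c2 k * (exp (- \<beta> * t / \<alpha>) * (- \<beta> / \<alpha>)))\<^sup>2) * indicator (cell \<tau> k) t"
      using deriv_expo[OF cc[of k], of t] assms(2) unfolding cellk by (auto simp: indicator_def)
  qed
  have du: "(\<lambda>t. ennreal ((deriv u t)\<^sup>2) * indicator (cell \<tau> k) t)
      = (\<lambda>t. ennreal ((B k)\<^sup>2) * indicator (cell \<tau> k) t)" for k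
  proof
    fix t show "ennreal ((deriv u t)\<^sup>2) * indicator (cell \<tau> k) t = ennreal ((B k)\<^sup>2) * indicator (cell \<tau> k) t"
      using deriv_affine[OF AB[of k], of t] unfolding cellk by (auto simp: indicator_def)
  qed
  have Lv: "L2_sq (deriv v) = (\<Sum>n. \<integral>\<^sup>+t. ennreal ((deriv v t)\<^sup>2) * indicator (cell \<tau> (int_decode n)) t \<partial>lborel)"
    unfolding L2_sq_def
    by (rule decomp[OF assms(3)]) (subst dv, unfold cell_def, measurable)
  have Lu: "L2_sq (deriv u) = (\<Sum>n. \<integral>\<^sup>+t. ennreal ((deriv u t)\<^sup>2) * indicator (cell \<tau> (int_decode n)) t \<partial>lborel)"
    unfolding L2_sq_def
    by (rule decomp[OF assms(3)]) (subst du, unfold cell_def, measurable)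
  have Lu2: "L2_sq (deriv u) = (\<Sum>n. ennreal ((B (j n))\<^sup>2 * \<tau>))"
    unfolding Lu cellk j_def using U_cell[OF AB assms(3)] by simp
  have Vn: "ennreal \<alpha> * (\<integral>\<^sup>+t. ennreal ((deriv v t)\<^sup>2) * indicator (cell \<tau> (j n)) t \<partial>lborel)
      \<le> ennreal ((\<beta>/2) * (B (j n) * \<tau>)\<^sup>2) + ennreal (\<alpha> * (B (j n))\<^sup>2 * \<tau>)" for n
    unfolding cellk by (rule V_cell[OF assms(2,1,3) AB cc interp i1])
  define g where "g x = (\<Sum>n. ennreal ((B (j n))\<^sup>2 * \<tau>) * indicator (cell \<tau> (j n)) x)" for x
  have g_le: "g x \<le> (\<integral>\<^sup>+y. ennreal ((u x - u y)\<^sup>2 / (x - y)\<^sup>2) \<partial>lborel)" for x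
  proof (cases "\<exists>m. x \<in> cell \<tau> (j m)")
    case True
    then obtain m where m: "x \<in> cell \<tau> (j m)" by blast
    have "g x = ennreal ((B (j m))\<^sup>2 * \<tau>)"
      unfolding g_def j_def using sum_cells[OF assms(3) m[unfolded j_def]] by simp
    also have "\<dots> \<le> (\<integral>\<^sup>+y. ennreal ((u x - u y)\<^sup>2 / (x - y)\<^sup>2) \<partial>lborel)"
      by (rule H_cell[OF AB assms(3)]) (use m cellk in auto)
    finally show ?thesis .
  next
    case False
    then have "g x = 0" unfolding g_def by simp
    then show ?thesis by simp
  qed
  have intg: "(\<integral>\<^sup>+x. g x \<partial>lborel) = (\<Sum>n. ennreal ((B (j n) * \<tau>)\<^sup>2))"
  proof -
    have "(\<integral>\<^sup>+x. g x \<partial>lborel) = (\<Sum>n. \<integral>\<^sup>+x. ennreal ((B (j n))\<^sup>2 * \<tau>) * indicator (cell \<tau> (j n)) x \<partial>lborel)"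
      unfolding g_def by (rule nn_integral_suminf) (unfold cell_def, measurable)
    also have "\<dots> = (\<Sum>n. ennreal ((B (j n))\<^sup>2 * \<tau>) * ennreal \<tau>)"
      using assms(3) by (simp add: nn_integral_cmult_indicator cellk)
    also have "\<dots> = (\<Sum>n. ennreal ((B (j n) * \<tau>)\<^sup>2))"
      using assms(3) by (simp add: ennreal_mult[symmetric] power_mult_distrib power2_eq_square mult_ac)
    finally show ?thesis .
  qed
  have Hbound: "(\<Sum>n. ennreal ((B (j n) * \<tau>)\<^sup>2)) \<le> H12_seminorm_sq u"
    unfolding H12_seminorm_sq_def intg[symmetric] by (rule nn_integral_mono) (rule g_le)
  have "ennreal \<alpha> * L2_sq (deriv v)
      = (\<Sum>n. ennreal \<alpha> * (\<integral>\<^sup>+t. ennreal ((deriv v t)\<^sup>2) * indicator (cell \<tau> (j n)) t \<partial>lborel))"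
    unfolding Lv j_def by simp
  also have "\<dots> \<le> (\<Sum>n. ennreal ((\<beta>/2) * (B (j n) * \<tau>)\<^sup>2) + ennreal (\<alpha> * (B (j n))\<^sup>2 * \<tau>))"
    by (rule suminf_le[OF Vn]) auto
  also have "\<dots> = (\<Sum>n. ennreal ((\<beta>/2) * (B (j n) * \<tau>)\<^sup>2)) + (\<Sum>n. ennreal (\<alpha> * (B (j n))\<^sup>2 * \<tau>))"
    by (rule suminf_add[symmetric]) auto
  also have "(\<Sum>n. ennreal ((\<beta>/2) * (B (j n) * \<tau>)\<^sup>2)) = ennreal (\<beta>/2) * (\<Sum>n. ennreal ((B (j n) * \<tau>)\<^sup>2))"
  proof -
    have "\<And>n. ennreal ((\<beta>/2) * (B (j n) * \<tau>)\<^sup>2) = ennreal (\<beta>/2) * ennreal ((B (j n) * \<tau>)\<^sup>2)"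
      using assms(1) by (intro ennreal_mult) auto
    then show ?thesis by (simp only: ennreal_suminf_cmult)
  qed
  also have "(\<Sum>n. ennreal (\<alpha> * (B (j n))\<^sup>2 * \<tau>)) = ennreal \<alpha> * L2_sq (deriv u)"
    unfolding Lu2 using assms(2,3) by (simp add: ennreal_mult mult.assoc)
  finally have "ennreal \<alpha> * L2_sq (deriv v) \<le> ennreal (\<beta>/2) * (\<Sum>n. ennreal ((B (j n) * \<tau>)\<^sup>2)) + ennreal \<alpha> * L2_sq (deriv u)" .
  also have "\<dots> \<le> ennreal (\<beta>/2) * H12_seminorm_sq u + ennreal \<alpha> * L2_sq (deriv u)"
    using Hbound by (intro add_right_mono mult_left_mono) auto
  finally show ?thesis .
qed

theorem proposition13:
  fixes \<beta> :: real
  assumes "\<beta> > 0"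
  shows "\<exists>C::real. \<forall>\<alpha> \<tau> u v. \<alpha> > 0 \<longrightarrow> \<tau> > 0 \<longrightarrow> in_H1 u \<longrightarrow>
           piecewise_affine_grid \<tau> u \<longrightarrow> upwinded_interpolant \<alpha> \<beta> \<tau> u v \<longrightarrow>
           ennreal \<alpha> * L2_sq (deriv v)
             \<le> ennreal C * (H12_seminorm_sq u + ennreal \<alpha> * L2_sq (deriv u))"
proof (intro exI allI impI)
  fix \<alpha> \<tau> :: real and u v :: "real \<Rightarrow> real"
  assume h: "\<alpha> > 0" "\<tau> > 0" "in_H1 u" "piecewise_affine_grid \<tau> u" "upwinded_interpolant \<alpha> \<beta> \<tau> u v"
  define C where "C = max 1 (\<beta>/2)"
  have "ennreal \<alpha> * L2_sq (deriv v) \<le> ennreal (\<beta>/2) * H12_seminorm_sq u + ennreal \<alpha> * L2_sq (deriv u)"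
    by (rule main_bound[OF assms h(1,2,4,5)])
  also have "\<dots> \<le> ennreal C * H12_seminorm_sq u + ennreal C * (ennreal \<alpha> * L2_sq (deriv u))"
  proof (intro add_mono mult_right_mono)
    show "ennreal (\<beta>/2) \<le> ennreal C" unfolding C_def by (intro ennreal_leI) simp
    have "ennreal 1 \<le> ennreal C" unfolding C_def by (intro ennreal_leI) simp
    then show "ennreal \<alpha> * L2_sq (deriv u) \<le> ennreal C * (ennreal \<alpha> * L2_sq (deriv u))"
      using mult_right_mono[of "ennreal 1" "ennreal C" "ennreal \<alpha> * L2_sq (deriv u)"] by simp
  qed auto
  also have "\<dots> = ennreal C * (H12_seminorm_sq u + ennreal \<alpha> * L2_sq (deriv u))"
    by (simp add: distrib_left)
  finally show "ennreal \<alpha> * L2_sq (deriv v) \<le> ennreal (max 1 (\<beta>/2)) * (H12_seminorm_sq u + ennreal \<alpha> * L2_sq (deriv u))"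
    unfolding C_def .
qed

end
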